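(* In the model described in the context, there exist choices of the model primitives (group fractions $\lambda_0,\lambda_1$, densities $f_{e,s}$ satisfying the monotone likelihood ratio property, $v_q,v_u,\omega>0$, and $\underline c<\bar c$) for which there is an equilibrium under the color-blind policy, $(\tilde\theta_0,\tilde\theta_1,\pi_0,\pi_1)$ with $\tilde\theta_0=\tilde\theta_1$, such that $\pi_0\neq\pi_1$.
   Context: Two groups $s\in\{0,1\}$ with population fractions $\lambda_1\in(0,1)$, $\lambda_0=1-\lambda_1$. Each applicant draws a cost $c$ uniformly on $[\underline c,\bar c]$ and chooses effort $e\in\{q,u\}$. A classifier score $\theta\in\mathbb{R}$ has density $f_{e,s}$ and distribution function $F_{e,s}$ given effort $e$ and group $s$; monotone likelihood ratio property: $f_{q,s}(\theta)/f_{u,s}(\theta)$ strictly increasing in $\theta$ for each $s$. Firm gains $v_q>0$ per accepted qualified applicant and loses $v_u>0$ per accepted unqualified one; $r=v_q/v_u$; accepted applicants get $\omega>0$. Let $\tilde c_s(\theta)=\omega[F_{u,s}(\theta)-F_{q,s}(\theta)]$ and $G(c)=\min\!\left(1,\frac{c-\underline c}{\bar c-\underline c}\right)$. An equilibrium under the color-blind (CB) policy is a quadruple $(\tilde\theta_0,\tilde\theta_1,\pi_0,\pi_1)$ with $\tilde\theta:=\tilde\theta_0=\tilde\theta_1$, $\pi_s=G(\tilde c_s(\tilde\theta))$ for $s=0,1$, and $$\lambda_0\pi_0+\lambda_1\pi_1=\frac{\phi(\tilde\theta)}{r+\phi(\tilde\theta)},\qquad \phi(\theta)=\frac{\lambda_0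 f_{u,0}(\theta)+\lambda_1 f_{u,1}(\theta)}{\lambda_0 f_{q,0}(\theta)+\lambda_1 f_{q,1}(\theta)}.$$ *)

theory Defs
  imports "HOL-Analysis.Analysis"
begin

datatype effort = Qual | Unqual

definition is_density :: "(real \<Rightarrow> real) \<Rightarrow> bool" where
  "is_density f \<longleftrightarrow> f \<in> borel_measurable lborel \<and> (\<forall>x. 0 \<le> f x)
     \<and> integrable lborel f \<and> integral\<^sup>L lborel f = 1"

definition cdf :: "(real \<Rightarrow> real) \<Rightarrow> real \<Rightarrow> real" where
  "cdf f \<theta> = (LINT x:{..\<theta>}|lborel. f x)"

text \<open>Monotone likelihood ratio property for group s (f_u positive so the ratio is defined).\<close>
definition MLRP :: "(effort \<Rightarrow> nat \<Rightarrow> real \<Rightarrow> real) \<Rightarrow> nat \<Rightarrow> bool" where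
  "MLRP f s \<longleftrightarrow> (\<forall>\<theta>. f Unqual s \<theta> > 0) \<and> strict_mono (\<lambda>\<theta>. f Qual s \<theta> / f Unqual s \<theta>)"

definition Gcost :: "real \<Rightarrow> real \<Rightarrow> real \<Rightarrow> real" where
  "Gcost clo chi c = min 1 ((c - clo) / (chi - clo))"

definition ctilde :: "(effort \<Rightarrow> nat \<Rightarrow> real \<Rightarrow> real) \<Rightarrow> real \<Rightarrow> nat \<Rightarrow> real \<Rightarrow> real" where
  "ctilde f \<omega> s \<theta> = \<omega> * (cdf (f Unqual s) \<theta> - cdf (f Qual s) \<theta>)"

definition phi :: "real \<Rightarrow> (effort \<Rightarrow> nat \<Rightarrow> real \<Rightarrow> real) \<Rightarrow> real \<Rightarrow> real" where
  "phi lam1 f \<theta> = ((1 - lam1) * f Unqual 0 \<theta> + lam1 * f Unqual 1 \<theta>)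
                 / ((1 - lam1) * f Qual 0 \<theta> + lam1 * f Qual 1 \<theta>)"

definition CB_equilibrium ::
  "real \<Rightarrow> (effort \<Rightarrow> nat \<Rightarrow> real \<Rightarrow> real) \<Rightarrow> real \<Rightarrow> real \<Rightarrow> real \<Rightarrow> real \<Rightarrow> real
   \<Rightarrow> real \<Rightarrow> real \<Rightarrow> real \<Rightarrow> real \<Rightarrow> bool" where
  "CB_equilibrium lam1 f vq vu \<omega> clo chi \<theta>0 \<theta>1 \<pi>0 \<pi>1 \<longleftrightarrow>
     \<theta>0 = \<theta>1
     \<and> \<pi>0 = Gcost clo chi (ctilde f \<omega> 0 \<theta>0)
     \<and> \<pi>1 = Gcost clo chi (ctilde f \<omega> 1 \<theta>0)
     \<and> (1 - lam1) * \<pi>0 + lam1 * \<pi>1 = phi lam1 f \<theta>0 / (vq / vu + phi lam1 f \<theta>0)"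

end

theory Submission imports Defs begin

definition sg :: "real \<Rightarrow> real" where "sg x = 1 / (1 + exp (-x))"
definition gk :: "nat \<Rightarrow> real \<Rightarrow> real" where
  "gk k x = real k * exp (-x) / (1 + exp (-x)) ^ (k+1)"
definition Fk :: "nat \<Rightarrow> real \<Rightarrow> real" where "Fk k = (\<lambda>x. sg x ^ k)"

lemma sg_deriv: "(sg has_real_derivative exp (-x) / (1 + exp (-x))^2) (at x)"
proof -
  have p: "1 + exp (-x) \<noteq> 0" by (metis add_pos_pos exp_gt_zero less_numeral_extra(1) order_less_irrefl)
  show ?thesis unfolding sg_def
    by (auto intro!: derivative_eq_intros simp: p power2_eq_square)
qed

lemma Fk_deriv: "(Fk k has_real_derivative gk k x) (at x)"
proof -
  have "(Fk k has_real_derivative real k * sg x ^ (k - 1) * (exp (-x) / (1 + exp (-x))^2)) (at x)"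
    unfolding Fk_def by (rule derivative_eq_intros sg_deriv refl)+ simp
  moreover have "real k * sg x ^ (k - 1) * (exp (-x) / (1 + exp (-x))^2) = gk k x"
  proof (cases k)
    case 0 then show ?thesis by (simp add: gk_def)
  next
    case (Suc m)
    have p: "1 + exp (-x) > 0" by (simp add: add_pos_pos)
    have gen: "real (Suc m) * (1 / (1 + e)) ^ m * (e / (1 + e)^2) = real (Suc m) * e / (1 + e) ^ (Suc m + 1)"
      if "e > 0" for e :: real
    proof -
      have "1 + e > 0" using that by simp
      have "(1+e)^(Suc m + 1) = (1+e)^m * (1+e)^2" by (simp add: power_add[symmetric])
      then show ?thesis by (simp add: power_divide power2_eq_square)
    qed
    have q: "(1 + exp (-x) = 0) = False" using p by simp
    show ?thesis using Suc gen[of "exp (-x)"] unfolding gk_def sg_def using Suc by (simp only: Suc diff_Suc_1 exp_gt_zero simp_thms)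
  qed
  ultimately show ?thesis by simp
qed

lemma gk_cont: "isCont (gk k) x"
proof -
  have "(1::real) + exp (-x) \<noteq> 0" by (smt (verit) exp_gt_zero)
  then show ?thesis unfolding gk_def by (intro continuous_intros) auto
qed

lemma gk_nonneg: "0 \<le> gk k x"
  unfolding gk_def by (simp add: add_pos_pos)

lemma sg_bot: "(sg \<longlongrightarrow> 0) at_bot" unfolding sg_def by real_asymp
lemma sg_top: "(sg \<longlongrightarrow> 1) at_top" unfolding sg_def by real_asymp

lemma Fk_bot: "k \<ge> 1 \<Longrightarrow> (Fk k \<longlongrightarrow> 0) at_bot"
proof -
  assume k: "k \<ge> 1"
  have "(0::real)^k = 0" using k by simp
  moreover have "((\<lambda>x. sg x ^ k) \<longlongrightarrow> 0^k) at_bot" by (rule tendsto_power[OF sg_bot])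
  ultimately show ?thesis unfolding Fk_def by (simp only:)
qed
lemma Fk_top: "(Fk k \<longlongrightarrow> 1) at_top"
  unfolding Fk_def using tendsto_power[OF sg_top, of k] by simp

lemma dens:
  assumes k: "k \<ge> 1"
  shows "is_density (gk k)" "cdf (gk k) t = Fk k t"
proof -
  have A: "((Fk k \<circ> real_of_ereal) \<longlongrightarrow> 0) (at_right (-\<infinity>))"
    using Fk_bot[OF k] by (simp add: ereal_tendsto_simps1)
  have B: "((Fk k \<circ> real_of_ereal) \<longlongrightarrow> 1) (at_left \<infinity>)"
    using Fk_top by (simp add: ereal_tendsto_simps1)
  have B2: "((Fk k \<circ> real_of_ereal) \<longlongrightarrow> Fk k t) (at_left (ereal t))"
    unfolding ereal_tendsto_simps1
    using Fk_deriv[of k t] DERIV_isCont isCont_def tendsto_mono at_le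
    by (metis at_left_eq at_within_open_subset order.refl open_UNIV subset_UNIV)
  note F1 = interval_integral_FTC_nonneg[of "-\<infinity>" "\<infinity>" "Fk k" "gk k" 0 1, OF _ Fk_deriv gk_cont _ A B]
  note F2 = interval_integral_FTC_nonneg[of "-\<infinity>" "ereal t" "Fk k" "gk k" 0 "Fk k t", OF _ Fk_deriv gk_cont _ A B2]
  have I1: "integrable lborel (gk k)" and I2: "integral\<^sup>L lborel (gk k) = 1"
    using F1 by (auto simp: gk_nonneg interval_lebesgue_integral_def einterval_eq_UNIV set_integrable_def set_lebesgue_integral_def)
  show "is_density (gk k)"
    unfolding is_density_def using I1 I2 gk_nonneg
    by (auto intro!: borel_measurable_continuous_onI continuous_at_imp_continuous_on gk_cont)
  have E: "einterval (-\<infinity>) (ereal t) = {..<t}" by (auto simp: einterval_def)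
  have M[measurable]: "gk k \<in> borel_measurable lborel"
    by (auto intro!: borel_measurable_continuous_onI continuous_at_imp_continuous_on gk_cont)
  have C: "(LINT x:{..<t}|lborel. gk k x) = Fk k t"
    using F2 by (simp add: gk_nonneg interval_lebesgue_integral_def E)
  have "(LINT x:{..t}|lborel. gk k x) = (LINT x:{..<t}|lborel. gk k x)"
    apply (rule set_integral_cong_set)
    using M apply (simp add: set_borel_measurable_def)
    using M apply (simp add: set_borel_measurable_def)
    using AE_lborel_singleton[of t] by (auto elim!: eventually_mono)
  then show "cdf (gk k) t = Fk k t" unfolding cdf_def using C by simp
qed

lemma sg_smono: "strict_mono sg"
proof (rule strict_monoI)
  fix x y :: real assume "x < y"
  then have "exp (-y) < exp (-x)" by simp
  then show "sg x < sg y" unfolding sg_def by (simp add: add_pos_pos divide_strict_left_mono)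
qed

lemma sg_pos: "0 < sg x" unfolding sg_def by (simp add: add_pos_pos)

lemma gk_ratio: "gk (Suc m) x / gk 1 x = real (Suc m) * sg x ^ m"
proof -
  have gen: "(c * e / a ^ (Suc m + 1)) / (1 * e / a ^ (1 + 1)) = c * (1 / a) ^ m"
    if "a > 0" "e > 0" for a e c :: real
  proof -
    have "a ^ (Suc m + 1) = a ^ m * a^2" by (simp add: power_add[symmetric])
    then show ?thesis using that by (simp add: power_divide field_simps)
  qed
  show ?thesis unfolding gk_def sg_def
    using gen[of "1 + exp (-x)" "exp (-x)" "real (Suc m)"] by (simp add: add_pos_pos)
qed

lemma gk_pos: "k \<ge> 1 \<Longrightarrow> 0 < gk k x" unfolding gk_def by (simp add: add_pos_pos)

lemma sg0: "sg 0 = 1/2" unfolding sg_def by simp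

theorem proposition2:
  shows "\<exists>(lam1::real) (f::effort \<Rightarrow> nat \<Rightarrow> real \<Rightarrow> real) (vq::real) (vu::real) (\<omega>::real)
            (clo::real) (chi::real) (\<theta>0::real) (\<theta>1::real) (\<pi>0::real) (\<pi>1::real).
           0 < lam1 \<and> lam1 < 1
         \<and> (\<forall>e. \<forall>s\<in>{0,1}. is_density (f e s))
         \<and> (\<forall>s\<in>{0,1}. MLRP f s)
         \<and> 0 < vq \<and> 0 < vu \<and> 0 < \<omega> \<and> clo < chi
         \<and> CB_equilibrium lam1 f vq vu \<omega> clo chi \<theta>0 \<theta>1 \<pi>0 \<pi>1
         \<and> \<pi>0 \<noteq> \<pi>1"
proof -
  define f :: "effort \<Rightarrow> nat \<Rightarrow> real \<Rightarrow> real" where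
    "f = (\<lambda>e s. case e of Unqual \<Rightarrow> gk 1 | Qual \<Rightarrow> (if s = 0 then gk 2 else gk 3))"
  have fU: "f Unqual s = gk 1" for s by (simp add: f_def)
  have fQ0: "f Qual 0 = gk 2" by (simp add: f_def)
  have fQ1: "f Qual 1 = gk 3" by (simp add: f_def)
  have dens_all: "\<forall>e. \<forall>s\<in>{0,1}. is_density (f e s)"
  proof (intro allI ballI)
    fix e and s :: nat assume "s \<in> {0,1}"
    then show "is_density (f e s)"
      by (cases e) (auto simp: f_def dens(1))
  qed
  have sm2: "strict_mono (\<lambda>x. real (Suc m) * sg x ^ m)" if "m > 0" for m
    using that by (auto intro!: strict_monoI power_strict_mono strict_monoD[OF sg_smono]
        simp: less_imp_le[OF sg_pos])
  have mlrp: "\<forall>s\<in>{0,1}. MLRP f s"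
  proof
    fix s :: nat assume s: "s \<in> {0,1}"
    have pos: "\<forall>\<theta>. f Unqual s \<theta> > 0" by (simp add: fU gk_pos)
    have "strict_mono (\<lambda>\<theta>. f Qual s \<theta> / f Unqual s \<theta>)"
    proof (cases "s = 0")
      case True
      have "(\<lambda>\<theta>. f Qual s \<theta> / f Unqual s \<theta>) = (\<lambda>x. real (Suc 1) * sg x ^ 1)"
        using gk_ratio[of 1] True by (simp add: fU fQ0 numeral_2_eq_2)
      then show ?thesis using sm2[of 1] by simp
    next
      case False
      then have s1: "s = 1" using s by auto
      have "(\<lambda>\<theta>. f Qual s \<theta> / f Unqual s \<theta>) = (\<lambda>x. real (Suc 2) * sg x ^ 2)"
        using gk_ratio[of 2] s1 by (simp add: fU f_def numeral_3_eq_3)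
      then show ?thesis using sm2[of 2] by simp
    qed
    then show "MLRP f s" using pos unfolding MLRP_def by simp
  qed
  have "cdf (gk 1) 0 = Fk 1 0" by (rule dens(2)) simp
  then have c1: "cdf (gk 1) 0 = 1/2" by (simp add: Fk_def sg0)
  have "cdf (gk 2) 0 = Fk 2 0" by (rule dens(2)) simp
  then have c2: "cdf (gk 2) 0 = 1/4" by (simp add: Fk_def sg0 power2_eq_square)
  have "cdf (gk 3) 0 = Fk 3 0" by (rule dens(2)) simp
  then have c3: "cdf (gk 3) 0 = 1/8" by (simp add: Fk_def sg0 power3_eq_cube)
  have ct0: "ctilde f 1 0 0 = 1/4" unfolding ctilde_def fU fQ0 c1 c2 by simp
  have ct1: "ctilde f 1 1 0 = 3/8" unfolding ctilde_def fU fQ1 c1 c3 by simp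
  have g1: "gk 1 0 = 1/4" "gk 2 0 = 1/4" "gk 3 0 = 3/16" by (simp_all add: gk_def)
  have ph: "phi (1/2) f 0 = 8/7" unfolding phi_def fU fQ0 fQ1 g1 by simp
  have eq: "CB_equilibrium (1/2) f 88 35 1 0 1 0 0 (1/4) (3/8)"
    unfolding CB_equilibrium_def Gcost_def ct0 ct1 ph by simp
  show ?thesis
    apply (rule exI[of _ "1/2"], rule exI[of _ f], rule exI[of _ 88], rule exI[of _ 35], rule exI[of _ 1])
    apply (rule exI[of _ 0], rule exI[of _ 1], rule exI[of _ 0], rule exI[of _ 0])
    apply (rule exI[of _ "1/4"], rule exI[of _ "3/8"])
    using dens_all mlrp eq by simp
qed

end
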